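(* Let $f:\mathcal D\to\{0,1\}$ with $\mathcal D\subseteq X\times Y$ be a (possibly partial) Boolean function. (1) If there is a $(d,\delta_0,\delta_1)$-threshold embedding of $f$ with $\delta_0<\delta_1$, then there is a $(d^2+1)$-dimensional realization of $f$ with margin $\gamma=(\delta_1-\delta_0)/(2+\delta_1+\delta_0)$. (2) Conversely, if there is a $d$-dimensional realization of $f$ with margin $\gamma>0$, then there is a $(d+1,\delta_0,\delta_1)$-threshold embedding of $f$ with $\delta_0=(1-\gamma)^2/4$ and $\delta_1=(1+\gamma)^2/4$.
   Context: Consider an assignment of unit vectors $\alpha_x\in\mathbb R^d$ for $x\in X$ and $\beta_y\in\mathbb R^d$ for $y\in Y$. It is a $(d,\delta_0,\delta_1)$-threshold embedding of $f$ if $|\langle\alpha_x,\beta_y\rangle|^2\le\delta_0$ for all $(x,y)\in f^{-1}(0)$ and $|\langle\alpha_x,\beta_y\rangle|^2\ge\delta_1$ for all $(x,y)\in f^{-1}(1)$. It is a $d$-dimensional realization of $f$ with margin $\gamma>0$ if $\langle\alpha_x,\beta_y\rangle\ge\gamma$ for all $(x,y)\in f^{-1}(0)$ and $\langle\alpha_x,\beta_y\rangle\le-\gamma$ for all $(x,y)\in f^{-1}(1)$. *)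

theory Defs
  imports Complex_Main
begin

text \<open>Vectors in R^d are represented as functions nat => real, of which only the
  coordinates 0..d-1 matter.\<close>

definition inner_d :: "nat \<Rightarrow> (nat \<Rightarrow> real) \<Rightarrow> (nat \<Rightarrow> real) \<Rightarrow> real" where
  "inner_d d u v = (\<Sum>i<d. u i * v i)"

definition unit_d :: "nat \<Rightarrow> (nat \<Rightarrow> real) \<Rightarrow> bool" where
  "unit_d d u \<longleftrightarrow> inner_d d u u = 1"

text \<open>A partial Boolean function on X x Y: f x y = None means (x,y) is outside the
  domain D; Some False encodes value 0 and Some True encodes value 1.\<close>

definition partial_bool_fun :: "'x set \<Rightarrow> 'y set \<Rightarrow> ('x \<Rightarrow> 'y \<Rightarrow> bool option) \<Rightarrow> bool" where
  "partial_bool_fun X Y f \<longleftrightarrow> (\<forall>x y. f x y \<noteq> None \<longrightarrow> x \<in> X \<and> y \<in> Y)"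

definition threshold_embedding ::
  "'x set \<Rightarrow> 'y set \<Rightarrow> ('x \<Rightarrow> 'y \<Rightarrow> bool option) \<Rightarrow> nat \<Rightarrow> real \<Rightarrow> real
     \<Rightarrow> ('x \<Rightarrow> nat \<Rightarrow> real) \<Rightarrow> ('y \<Rightarrow> nat \<Rightarrow> real) \<Rightarrow> bool" where
  "threshold_embedding X Y f d \<delta>0 \<delta>1 \<alpha> \<beta> \<longleftrightarrow>
     (\<forall>x\<in>X. unit_d d (\<alpha> x)) \<and> (\<forall>y\<in>Y. unit_d d (\<beta> y)) \<and>
     (\<forall>x\<in>X. \<forall>y\<in>Y. f x y = Some False \<longrightarrow> \<bar>inner_d d (\<alpha> x) (\<beta> y)\<bar>^2 \<le> \<delta>0) \<and>
     (\<forall>x\<in>X. \<forall>y\<in>Y. f x y = Some True \<longrightarrow> \<bar>inner_d d (\<alpha> x) (\<beta> y)\<bar>^2 \<ge> \<delta>1)"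

definition realization ::
  "'x set \<Rightarrow> 'y set \<Rightarrow> ('x \<Rightarrow> 'y \<Rightarrow> bool option) \<Rightarrow> nat \<Rightarrow> real
     \<Rightarrow> ('x \<Rightarrow> nat \<Rightarrow> real) \<Rightarrow> ('y \<Rightarrow> nat \<Rightarrow> real) \<Rightarrow> bool" where
  "realization X Y f d \<gamma> \<alpha> \<beta> \<longleftrightarrow>
     \<gamma> > 0 \<and>
     (\<forall>x\<in>X. unit_d d (\<alpha> x)) \<and> (\<forall>y\<in>Y. unit_d d (\<beta> y)) \<and>
     (\<forall>x\<in>X. \<forall>y\<in>Y. f x y = Some False \<longrightarrow> inner_d d (\<alpha> x) (\<beta> y) \<ge> \<gamma>) \<and>
     (\<forall>x\<in>X. \<forall>y\<in>Y. f x y = Some True \<longrightarrow> inner_d d (\<alpha> x) (\<beta> y) \<le> - \<gamma>)"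

end

theory Submission imports Defs begin
lemma sum_split_add: "(\<Sum>i<m+k. h i) = (\<Sum>i<m. h i) + (\<Sum>i<k. h (m+i::nat)) " for h :: "nat \<Rightarrow> real"
  by (induction k) auto
lemma sum_divmod: "(\<Sum>i<n*d. g (i div d) (i mod d)) = (\<Sum>j<n. \<Sum>k<d. g j k :: real)" for n d :: nat
proof (induction n)
  case 0 then show ?case by simp
next
  case (Suc n)
  have "(\<Sum>i<Suc n*d. g (i div d) (i mod d)) = (\<Sum>i<n*d. g (i div d) (i mod d)) + (\<Sum>k<d. g ((n*d+k) div d) ((n*d+k) mod d))"
    by (simp only: mult_Suc add.commute[of d] sum_split_add)
  also have "(\<Sum>k<d. g ((n*d+k) div d) ((n*d+k) mod d)) = (\<Sum>k<d. g n k)"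
    by (rule sum.cong) auto
  finally show ?case using Suc by simp
qed

lemma tensor_inner:
  "inner_d (d^2+1) (\<lambda>i. if i < d*d then p * u (i div d) * u (i mod d) else c)
     (\<lambda>i. if i < d*d then q * v (i div d) * v (i mod d) else e) = p*q*(inner_d d u v)^2 + c*e"
proof -
  have "inner_d (d^2+1) (\<lambda>i. if i < d*d then p * u (i div d) * u (i mod d) else c)
     (\<lambda>i. if i < d*d then q * v (i div d) * v (i mod d) else e)
    = (\<Sum>i<d*d. (p * u (i div d) * u (i mod d)) * (q * v (i div d) * v (i mod d))) + c*e"
    by (simp add: inner_d_def power2_eq_square)
  also have "(\<Sum>i<d*d. (p * u (i div d) * u (i mod d)) * (q * v (i div d) * v (i mod d)))
     = (\<Sum>j<d. \<Sum>k<d. (p * u j * u k) * (q * v j * v k))"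
    by (rule sum_divmod)
  also have "\<dots> = p*q*((\<Sum>j<d. u j * v j) * (\<Sum>k<d. u k * v k))"
    by (simp add: sum_product sum_distrib_left algebra_simps)
  finally show ?thesis by (simp add: inner_d_def power2_eq_square)
qed

lemma ext_inner:
  "inner_d (d+1) (\<lambda>i. if i < d then p * u i else c) (\<lambda>i. if i < d then q * v i else e)
    = p*q*inner_d d u v + c*e"
  by (simp add: inner_d_def sum_distrib_left algebra_simps)

lemma inner_le1: assumes "unit_d d u" "unit_d d v" shows "inner_d d u v \<le> 1"
proof -
  have "0 \<le> (\<Sum>i<d. (u i - v i)^2)" by (simp add: sum_nonneg)
  also have "\<dots> = inner_d d u u + inner_d d v v - 2 * inner_d d u v"
    by (simp add: inner_d_def power2_eq_square algebra_simps sum.distrib sum_subtractf sum_distrib_left)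
  finally show ?thesis using assms by (simp add: unit_d_def)
qed
theorem mainTheorem5:
  fixes X :: "'x set" and Y :: "'y set" and f :: "'x \<Rightarrow> 'y \<Rightarrow> bool option"
  assumes "partial_bool_fun X Y f"
  shows "(\<forall>d \<delta>0 \<delta>1 \<alpha> \<beta>. 0 \<le> \<delta>0 \<and> \<delta>0 < \<delta>1 \<and> threshold_embedding X Y f d \<delta>0 \<delta>1 \<alpha> \<beta> \<longrightarrow>
            (\<exists>\<alpha>' \<beta>'. realization X Y f (d^2 + 1) ((\<delta>1 - \<delta>0) / (2 + \<delta>1 + \<delta>0)) \<alpha>' \<beta>'))
       \<and> (\<forall>d \<gamma> \<alpha> \<beta>. \<gamma> > 0 \<and> realization X Y f d \<gamma> \<alpha> \<beta> \<longrightarrow>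
            (\<exists>\<alpha>' \<beta>'. threshold_embedding X Y f (d + 1) ((1 - \<gamma>)^2 / 4) ((1 + \<gamma>)^2 / 4) \<alpha>' \<beta>'))"
proof (intro conjI allI impI)
  fix d \<delta>0 \<delta>1 \<alpha> \<beta>
  assume h: "0 \<le> \<delta>0 \<and> \<delta>0 < \<delta>1 \<and> threshold_embedding X Y f d \<delta>0 \<delta>1 \<alpha> \<beta>"
  then have d0: "0 \<le> \<delta>0" and d01: "\<delta>0 < \<delta>1" and te: "threshold_embedding X Y f d \<delta>0 \<delta>1 \<alpha> \<beta>" by auto
  define m where "m = (\<delta>0 + \<delta>1) / 2"
  have m0: "0 < m" using d0 d01 by (simp add: m_def)
  define a where "a = sqrt (1 / (1 + m))"
  define b where "b = sqrt (m / (1 + m))"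
  have aa: "a * a = 1 / (1 + m)" using m0 by (simp add: a_def)
  have bb: "b * b = m / (1 + m)" using m0 by (simp add: b_def)
  have ab1: "a*a + b*b = 1"
  proof -
    have "a*a + b*b = 1/(1+m) + m/(1+m)" by (simp only: aa bb)
    also have "\<dots> = 1" using m0 by (simp add: add_divide_distrib[symmetric])
    finally show ?thesis .
  qed
  define \<alpha>' where "\<alpha>' = (\<lambda>x i. if i < d*d then a * \<alpha> x (i div d) * \<alpha> x (i mod d) else b)"
  define \<beta>' where "\<beta>' = (\<lambda>y i. if i < d*d then (-a) * \<beta> y (i div d) * \<beta> y (i mod d) else b)"
  have inn: "inner_d (d^2+1) (\<alpha>' x) (\<beta>' y) = (m - (inner_d d (\<alpha> x) (\<beta> y))^2) / (1 + m)" for x y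
  proof -
    let ?T = "(inner_d d (\<alpha> x) (\<beta> y))^2"
    have "a * (-a) * ?T + b * b = -(a*a) * ?T + b * b" by simp
    also have "\<dots> = -(1/(1+m)) * ?T + m/(1+m)" by (simp only: aa bb)
    also have "\<dots> = (m - ?T) / (1 + m)" by (simp add: diff_divide_distrib)
    finally show ?thesis unfolding \<alpha>'_def \<beta>'_def tensor_inner .
  qed
  have ua: "unit_d (d^2+1) (\<alpha>' x)" if "x \<in> X" for x
  proof -
    have "unit_d d (\<alpha> x)" using te that by (simp add: threshold_embedding_def)
    then show ?thesis unfolding unit_d_def \<alpha>'_def tensor_inner using ab1
      by simp
  qed
  have ub: "unit_d (d^2+1) (\<beta>' y)" if "y \<in> Y" for y
  proof -
    have "unit_d d (\<beta> y)" using te that by (simp add: threshold_embedding_def)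
    then show ?thesis unfolding unit_d_def \<beta>'_def tensor_inner using ab1
      by simp
  qed
  have gam: "(\<delta>1 - \<delta>0) / (2 + \<delta>1 + \<delta>0) = (m - \<delta>0) / (1 + m)"
    "(\<delta>1 - \<delta>0) / (2 + \<delta>1 + \<delta>0) = (\<delta>1 - m) / (1 + m)"
    using m0 d0 by (auto simp: m_def field_simps)
  have "realization X Y f (d^2 + 1) ((\<delta>1 - \<delta>0) / (2 + \<delta>1 + \<delta>0)) \<alpha>' \<beta>'"
    unfolding realization_def
  proof (intro conjI ballI impI)
    show "0 < (\<delta>1 - \<delta>0) / (2 + \<delta>1 + \<delta>0)" using d0 d01 by simp
  next
    fix x y assume xy: "x \<in> X" "y \<in> Y" "f x y = Some False"
    then have "\<bar>inner_d d (\<alpha> x) (\<beta> y)\<bar>^2 \<le> \<delta>0" using te by (simp add: threshold_embedding_def)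
    then show "(\<delta>1 - \<delta>0) / (2 + \<delta>1 + \<delta>0) \<le> inner_d (d\<^sup>2 + 1) (\<alpha>' x) (\<beta>' y)"
      unfolding gam(1) inn using m0 by (simp add: divide_right_mono)
  next
    fix x y assume xy: "x \<in> X" "y \<in> Y" "f x y = Some True"
    then have "\<bar>inner_d d (\<alpha> x) (\<beta> y)\<bar>^2 \<ge> \<delta>1" using te by (simp add: threshold_embedding_def)
    then show "inner_d (d\<^sup>2 + 1) (\<alpha>' x) (\<beta>' y) \<le> - ((\<delta>1 - \<delta>0) / (2 + \<delta>1 + \<delta>0))"
    proof -
      have "(m - (inner_d d (\<alpha> x) (\<beta> y))^2) / (1 + m) \<le> (m - \<delta>1) / (1 + m)"
      proof (rule divide_right_mono)
        have "(inner_d d (\<alpha> x) (\<beta> y))^2 \<ge> \<delta>1" using \<open>\<bar>inner_d d (\<alpha> x) (\<beta> y)\<bar>^2 \<ge> \<delta>1\<close> by simp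
        then show "m - (inner_d d (\<alpha> x) (\<beta> y))^2 \<le> m - \<delta>1" by linarith
        show "0 \<le> 1 + m" using m0 by linarith
      qed
      also have "\<dots> = - ((\<delta>1 - m) / (1 + m))" by (simp only: minus_divide_left minus_diff_eq)
      finally show ?thesis unfolding gam(2) inn .
    qed
  qed (use ua ub in auto)
  then show "\<exists>\<alpha>' \<beta>'. realization X Y f (d^2 + 1) ((\<delta>1 - \<delta>0) / (2 + \<delta>1 + \<delta>0)) \<alpha>' \<beta>'" by blast
next
  fix d \<gamma> \<alpha> \<beta>
  assume h: "\<gamma> > 0 \<and> realization X Y f d \<gamma> \<alpha> \<beta>"
  then have g0: "\<gamma> > 0" and re: "realization X Y f d \<gamma> \<alpha> \<beta>" by auto
  define s where "s = sqrt (1/2)"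
  have ss: "s * s = 1/2" unfolding s_def by (simp only: real_sqrt_mult_self[of "1/2"])
  define \<alpha>' where "\<alpha>' = (\<lambda>x i. if i < d then s * \<alpha> x i else s)"
  define \<beta>' where "\<beta>' = (\<lambda>y i. if i < d then (-s) * \<beta> y i else s)"
  have inn: "inner_d (d+1) (\<alpha>' x) (\<beta>' y) = (1 - inner_d d (\<alpha> x) (\<beta> y)) / 2" for x y
  proof -
    let ?T = "inner_d d (\<alpha> x) (\<beta> y)"
    have "s * (-s) * ?T + s * s = -(s*s) * ?T + s * s" by simp
    also have "\<dots> = -(1/2) * ?T + 1/2" by (simp only: ss)
    also have "\<dots> = (1 - ?T) / 2" by simp
    finally show ?thesis unfolding \<alpha>'_def \<beta>'_def ext_inner .
  qed
  have ua: "unit_d (d+1) (\<alpha>' x)" if "x \<in> X" for x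
  proof -
    have "unit_d d (\<alpha> x)" using re that by (simp add: realization_def)
    then show ?thesis unfolding unit_d_def \<alpha>'_def ext_inner
      by (simp only: ss)
  qed
  have ub: "unit_d (d+1) (\<beta>' y)" if "y \<in> Y" for y
  proof -
    have "unit_d d (\<beta> y)" using re that by (simp add: realization_def)
    then show ?thesis unfolding unit_d_def \<beta>'_def ext_inner
      by (simp only: ss mult_minus_left mult_minus_right minus_minus)
  qed
  have le1: "inner_d d (\<alpha> x) (\<beta> y) \<le> 1" if "x \<in> X" "y \<in> Y" for x y
    using re that by (intro inner_le1) (auto simp: realization_def)
  have "threshold_embedding X Y f (d + 1) ((1 - \<gamma>)^2 / 4) ((1 + \<gamma>)^2 / 4) \<alpha>' \<beta>'"
    unfolding threshold_embedding_def
  proof (intro conjI ballI impI)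
    fix x y assume xy: "x \<in> X" "y \<in> Y" "f x y = Some False"
    then have g: "\<gamma> \<le> inner_d d (\<alpha> x) (\<beta> y)" using re by (simp add: realization_def)
    have l: "inner_d d (\<alpha> x) (\<beta> y) \<le> 1" using le1 xy by auto
    have "((1 - inner_d d (\<alpha> x) (\<beta> y)) / 2)^2 \<le> ((1 - \<gamma>) / 2)^2"
    proof (rule power_mono)
      show "(1 - inner_d d (\<alpha> x) (\<beta> y)) / 2 \<le> (1 - \<gamma>) / 2" using g by (intro divide_right_mono) auto
      show "0 \<le> (1 - inner_d d (\<alpha> x) (\<beta> y)) / 2" using l by simp
    qed
    then show "\<bar>inner_d (d + 1) (\<alpha>' x) (\<beta>' y)\<bar>^2 \<le> (1 - \<gamma>)^2 / 4"
      unfolding inn power2_abs by (simp add: power_divide)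
  next
    fix x y assume xy: "x \<in> X" "y \<in> Y" "f x y = Some True"
    then have g: "inner_d d (\<alpha> x) (\<beta> y) \<le> - \<gamma>" using re by (simp add: realization_def)
    have "((1 + \<gamma>) / 2)^2 \<le> ((1 - inner_d d (\<alpha> x) (\<beta> y)) / 2)^2"
    proof (rule power_mono)
      show "(1 + \<gamma>) / 2 \<le> (1 - inner_d d (\<alpha> x) (\<beta> y)) / 2" using g by (intro divide_right_mono) auto
      show "0 \<le> (1 + \<gamma>) / 2" using g0 by simp
    qed
    then show "\<bar>inner_d (d + 1) (\<alpha>' x) (\<beta>' y)\<bar>^2 \<ge> (1 + \<gamma>)^2 / 4"
      unfolding inn power2_abs by (simp add: power_divide)
  qed (use ua ub in auto)
  then show "\<exists>\<alpha>' \<beta>'. threshold_embedding X Y f (d + 1) ((1 - \<gamma>)^2 / 4) ((1 + \<gamma>)^2 / 4) \<alpha>' \<beta>'" by blast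
qed

end
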